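(* For every $t\in(0,1)$, $$\lim_{k \to \infty} \sum_{n=0}^{\infty} (-1)^n B^n_k(t) = 0,$$ where the limit is over nonnegative integers $k$.
   Context: The Bernstein polynomials are $B^n_k(t) = \binom{n}{k} t^k (1-t)^{n-k}$ for integers $0\le k\le n$, and $B^n_k(t)=0$ for $n<k$. *)

theory Defs
  imports "HOL-Analysis.Analysis"
begin

definition bernstein :: "nat \<Rightarrow> nat \<Rightarrow> real \<Rightarrow> real" where
  "bernstein n k t = (if k \<le> n then real (n choose k) * t ^ k * (1 - t) ^ (n - k) else 0)"

end

theory Submission
  imports Defs
begin

lemma series_val:
  fixes t :: real and k :: nat
  assumes "0 < t" and "t < 1"
  shows "(\<lambda>n. (-1) ^ n * bernstein n k t) sums ((-(t / (2 - t))) ^ k / (2 - t))"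
proof -
  define s where "s = 1 - t"
  have s: "\<bar>s\<bar> < 1" using assms s_def by auto
  have g: "(\<lambda>m. ((- real (k+1)) gchoose m) * s ^ m) sums (1 + s) powr (- real (k+1))"
    by (rule gen_binomial_real[OF s])
  have e: "((- real (k+1)) gchoose m) = (-1) ^ m * real ((m + k) choose k)" for m
  proof -
    have "((- real (k+1)) gchoose m) = (-1) ^ m * ((real (k+1) + real m - 1) gchoose m)"
      by (rule gbinomial_minus)
    also have "real (k+1) + real m - 1 = real (m + k)" by simp
    also have "(real (m + k) gchoose m) = real ((m + k) choose m)"
      by (simp add: binomial_gbinomial)
    also have "(m + k) choose m = (m + k) choose k"
      by (metis add_diff_cancel_left' binomial_symmetric le_add2 add.commute)
    finally show ?thesis .
  qed
  have pw: "(1 + s) powr (- real (k+1)) = 1 / (2 - t) ^ (k+1)"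
    apply (subst powr_minus, subst powr_realpow)
    using assms s_def by (auto simp: divide_inverse)
  have g2: "(\<lambda>m. (-1) ^ m * real ((m + k) choose k) * s ^ m) sums (1 / (2 - t) ^ (k+1))"
    using g unfolding e pw .
  have g3: "(\<lambda>m. ((-1) ^ k * t ^ k) * ((-1) ^ m * real ((m + k) choose k) * s ^ m))
      sums (((-1) ^ k * t ^ k) * (1 / (2 - t) ^ (k+1)))"
    by (rule sums_mult[OF g2])
  have eq: "(-1) ^ (m + k) * bernstein (m + k) k t
      = ((-1) ^ k * t ^ k) * ((-1) ^ m * real ((m + k) choose k) * s ^ m)" for m
    by (simp add: bernstein_def s_def power_add)
  have val: "((-1) ^ k * t ^ k) * (1 / (2 - t) ^ (k+1)) = (-(t / (2 - t))) ^ k / (2 - t)"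
    using assms by (simp add: power_minus' power_divide field_simps)
  have sh: "(\<lambda>m. (-1) ^ (m + k) * bernstein (m + k) k t) sums ((-(t / (2 - t))) ^ k / (2 - t))"
    using g3 unfolding eq[symmetric] val .
  have z: "sum (\<lambda>n. (-1) ^ n * bernstein n k t) {..<k} = 0"
    by (simp add: bernstein_def)
  show ?thesis using sh sums_iff_shift[of "\<lambda>n. (-1) ^ n * bernstein n k t" k] z by simp
qed

theorem mainTheorem9:
  fixes t :: real
  assumes "0 < t" and "t < 1"
  shows "(\<lambda>k. \<Sum>n. (-1) ^ n * bernstein n k t) \<longlonglongrightarrow> 0"
proof -
  have r: "norm (-(t / (2 - t))) < 1" using assms by (simp add: abs_if field_simps)
  have "(\<lambda>k. (-(t / (2 - t))) ^ k / (2 - t)) \<longlonglongrightarrow> 0 / (2 - t)"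
    by (intro tendsto_divide tendsto_const LIMSEQ_power_zero r) (use assms in auto)
  then show ?thesis using series_val[OF assms] by (simp add: sums_iff)
qed

end
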